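(* Let $R$ be a principal ideal domain and $p$ a prime element of $R$. The ideal $I = (X^2-p,\ X^3)$ of $R[X]$ has radical $(X,p)$, which is a maximal ideal of $R[X]$; hence $I$ is a primary ideal of $R[X]$ which is not power stable.
   Context: An ideal $I$ of the polynomial ring $R[X]$ over an integral domain $R$ is called power stable if $I^t\cap R = (I\cap R)^t$ for all integers $t\geq 1$. *)

theory Defs
  imports "HOL-Computational_Algebra.Polynomial" "HOL-Computational_Algebra.Factorial_Ring"
begin

definition is_ideal :: "'a::comm_ring_1 set \<Rightarrow> bool" where
  "is_ideal I \<longleftrightarrow> 0 \<in> I \<and> (\<forall>a\<in>I. \<forall>b\<in>I. a + b \<in> I) \<and> (\<forall>r. \<forall>a\<in>I. r * a \<in> I)"

definition ideal_gen :: "'a::comm_ring_1 set \<Rightarrow> 'a set" where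
  "ideal_gen S = \<Inter>{I. is_ideal I \<and> S \<subseteq> I}"

definition ideal_mult :: "'a::comm_ring_1 set \<Rightarrow> 'a set \<Rightarrow> 'a set" where
  "ideal_mult I J = ideal_gen {a * b |a b. a \<in> I \<and> b \<in> J}"

primrec ideal_pow :: "'a::comm_ring_1 set \<Rightarrow> nat \<Rightarrow> 'a set" where
  "ideal_pow I 0 = UNIV"
| "ideal_pow I (Suc n) = ideal_mult I (ideal_pow I n)"

definition radical :: "'a::comm_ring_1 set \<Rightarrow> 'a set" where
  "radical I = {x. \<exists>n. x ^ n \<in> I}"

definition maximal_ideal :: "'a::comm_ring_1 set \<Rightarrow> bool" where
  "maximal_ideal I \<longleftrightarrow> is_ideal I \<and> I \<noteq> UNIV \<and>
     (\<forall>J. is_ideal J \<and> I \<subseteq> J \<longrightarrow> J = I \<or> J = UNIV)"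

definition primary_ideal :: "'a::comm_ring_1 set \<Rightarrow> bool" where
  "primary_ideal I \<longleftrightarrow> is_ideal I \<and> I \<noteq> UNIV \<and>
     (\<forall>a b. a * b \<in> I \<longrightarrow> a \<in> I \<or> b \<in> radical I)"

definition PID_type :: "'a::idom itself \<Rightarrow> bool" where
  "PID_type _ \<longleftrightarrow> (\<forall>I::'a set. is_ideal I \<longrightarrow> (\<exists>a. I = ideal_gen {a}))"

text \<open>Contraction \<open>I \<inter> R\<close> of an ideal of \<open>R[X]\<close>, with \<open>R\<close> identified with the constants.\<close>
definition contr :: "'a::comm_ring_1 poly set \<Rightarrow> 'a set" where
  "contr I = {c. [:c:] \<in> I}"

definition power_stable :: "'a::idom poly set \<Rightarrow> bool" where
  "power_stable I \<longleftrightarrow> (\<forall>t\<ge>1. contr (ideal_pow I t) = ideal_pow (contr I) t)"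

end

theory Submission imports Defs begin

lemma ideal_gen_ideal: "is_ideal (ideal_gen S)"
  unfolding ideal_gen_def is_ideal_def by auto
lemma ideal_gen_sub: "S \<subseteq> ideal_gen S"
  unfolding ideal_gen_def by auto
lemma ideal_gen_least: "is_ideal J \<Longrightarrow> S \<subseteq> J \<Longrightarrow> ideal_gen S \<subseteq> J"
  unfolding ideal_gen_def by auto
lemma ideal_gen_id: "is_ideal J \<Longrightarrow> ideal_gen J = J"
  using ideal_gen_least ideal_gen_sub by blast

lemma ideal_gen2: "ideal_gen {x::'a::comm_ring_1, y} = {a*x+b*y | a b. True}"
proof
  have "is_ideal {a*x+b*y | a b. True}"
    unfolding is_ideal_def
  proof (intro conjI ballI allI)
    show "0 \<in> {a*x+b*y | a b. True}" by (intro CollectI exI[of _ 0]) simp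
  next
    fix u v assume "u \<in> {a*x+b*y | a b. True}" "v \<in> {a*x+b*y | a b. True}"
    then obtain a b c d where "u = a*x+b*y" "v = c*x+d*y" by auto
    then show "u + v \<in> {a*x+b*y | a b. True}"
      by (intro CollectI exI[of _ "a+c"] exI[of _ "b+d"]) (simp add: algebra_simps)
  next
    fix r u assume "u \<in> {a*x+b*y | a b. True}"
    then obtain a b where "u = a*x+b*y" by auto
    then show "r * u \<in> {a*x+b*y | a b. True}"
      by (intro CollectI exI[of _ "r*a"] exI[of _ "r*b"]) (simp add: algebra_simps)
  qed
  moreover have "{x,y} \<subseteq> {a*x+b*y | a b. True}"
  proof -
    have "x = 1*x+0*y" "y = 0*x+1*y" by simp_all
    then show ?thesis by blast
  qed
  ultimately show "ideal_gen {x, y} \<subseteq> {a*x+b*y | a b. True}" by (rule ideal_gen_least)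
next
  show "{a*x+b*y | a b. True} \<subseteq> ideal_gen {x, y}"
  proof
    fix u assume "u \<in> {a*x+b*y | a b. True}"
    then obtain a b where u: "u = a*x+b*y" by auto
    have "x \<in> ideal_gen {x,y}" "y \<in> ideal_gen {x,y}" using ideal_gen_sub[of "{x,y}"] by auto
    then show "u \<in> ideal_gen {x,y}" using ideal_gen_ideal[of "{x,y}"] u
      unfolding is_ideal_def by blast
  qed
qed

lemma ideal_gen1: "ideal_gen {x::'a::comm_ring_1} = {a*x | a. True}"
proof -
  have "ideal_gen {x, 0} = ideal_gen {x}"
  proof -
    have "ideal_gen {x,0} \<subseteq> ideal_gen {x}"
      by (rule ideal_gen_least[OF ideal_gen_ideal]) (use ideal_gen_sub ideal_gen_ideal in \<open>auto simp: is_ideal_def\<close>)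
    moreover have "ideal_gen {x} \<subseteq> ideal_gen {x,0}"
      by (rule ideal_gen_least[OF ideal_gen_ideal]) (use ideal_gen_sub[of "{x,0}"] in auto)
    ultimately show ?thesis by blast
  qed
  then show ?thesis using ideal_gen2[of x 0] by simp
qed

lemma dvd_ideal: "is_ideal {c::'a::comm_ring_1. q dvd c}"
  unfolding is_ideal_def by auto

definition Xv :: "'a::comm_ring_1 poly" where "Xv = [:0,1:]"

lemma f_eq: "[:- p, 0, 1:] = Xv^2 - [:p::'a::comm_ring_1:]"
  by (simp add: Xv_def power2_eq_square)
lemma g_eq: "[:0, 0, 0, 1:] = (Xv::'a::comm_ring_1 poly)^3"
  by (simp add: Xv_def power3_eq_cube)

lemma split_poly: "\<exists>t. h = [:coeff h 0:] + Xv * (t::'a::comm_ring_1 poly)"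
proof (cases h)
  case (pCons c t)
  then show ?thesis by (intro exI[of _ t]) (simp add: Xv_def)
qed

lemma contr_I: 
  fixes p c :: "'a::comm_ring_1"
  assumes "[:c:] = a*[:-p,0,1:] + b*[:0,0,0,1:]"
  shows "p^2 dvd c"
proof -
  have c0: "coeff [:c:] 0 = coeff (a*[:-p,0,1:] + b*[:0,0,0,1:]) 0" using assms by simp
  have c2: "coeff [:c:] 2 = coeff (a*[:-p,0,1:] + b*[:0,0,0,1:]) 2" using assms by simp
  have e0: "c = - p * coeff a 0" using c0 by (simp add: coeff_mult_0)
  have e2: "0 = coeff a 0 - p * coeff a 2" using c2
    by (simp add: coeff_mult numeral_2_eq_2 atMost_Suc)
  have "c = p^2 * (- coeff a 2)" using e0 e2 by (simp add: algebra_simps power2_eq_square)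
  then show ?thesis by simp
qed

lemma M_eq: "ideal_gen {Xv, [:p::'a::comm_ring_1:]} = {h. p dvd coeff h 0}"
  unfolding ideal_gen2
proof safe
  fix a b :: "'a poly"
  show "p dvd coeff (a*Xv + b*[:p:]) 0" by (simp add: coeff_mult_0 Xv_def)
next
  fix h :: "'a poly" assume "p dvd coeff h 0"
  then obtain k where k: "coeff h 0 = p * k" by auto
  obtain t where t: "h = [:coeff h 0:] + Xv * t" using split_poly by blast
  have "h = t * Xv + [:k:] * [:p:]" using t k by (simp add: algebra_simps)
  then show "\<exists>a b. h = a*Xv + b*[:p:] \<and> True" by blast
qed


lemma ideal_diff: "is_ideal J \<Longrightarrow> a \<in> J \<Longrightarrow> b \<in> J \<Longrightarrow> a - b \<in> J"
proof -
  assume J: "is_ideal J" and a: "a \<in> J" and b: "b \<in> J"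
  have m: "\<forall>r. \<forall>a\<in>J. r * a \<in> J" and ad: "\<forall>a\<in>J. \<forall>b\<in>J. a + b \<in> J"
    using J unfolding is_ideal_def by simp_all
  have "(-1) * b \<in> J" using m b by blast
  then have "a + (-1) * b \<in> J" using ad a by blast
  then show ?thesis by simp
qed

lemma ideal_multI: "is_ideal J \<Longrightarrow> a \<in> J \<Longrightarrow> r * a \<in> J"
  unfolding is_ideal_def by simp

lemma ideal_addI: "is_ideal J \<Longrightarrow> a \<in> J \<Longrightarrow> b \<in> J \<Longrightarrow> a + b \<in> J"
  unfolding is_ideal_def by simp

lemma ideal_mult_sub: 
  assumes "is_ideal K" "\<And>a b. a \<in> A \<Longrightarrow> b \<in> B \<Longrightarrow> a * b \<in> K"
  shows "ideal_mult A B \<subseteq> K"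
  unfolding ideal_mult_def
proof (rule ideal_gen_least[OF assms(1)])
  show "{a * b |a b. a \<in> A \<and> b \<in> B} \<subseteq> K" using assms(2) by blast
qed

lemma ideal_mult_mem: "a \<in> A \<Longrightarrow> b \<in> B \<Longrightarrow> a * b \<in> ideal_mult A B"
proof -
  assume "a \<in> A" "b \<in> B"
  then have "a * b \<in> {a * b |a b. a \<in> A \<and> b \<in> B}" by blast
  then show ?thesis unfolding ideal_mult_def using ideal_gen_sub by (rule subsetD[rotated])
qed

lemma ideal_mult_ideal: "is_ideal (ideal_mult A B)"
  unfolding ideal_mult_def by (rule ideal_gen_ideal)

lemma maximal_M:
  fixes p :: "'a::idom"
  assumes pid: "PID_type TYPE('a)" and pr: "prime_elem p"
  shows "maximal_ideal {h::'a poly. p dvd coeff h 0}"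
  unfolding maximal_ideal_def
proof (intro conjI allI impI)
  show "is_ideal {h::'a poly. p dvd coeff h 0}"
    unfolding is_ideal_def by (auto simp: coeff_mult_0)
  have "\<not> p dvd 1" using pr by (simp add: prime_elem_def)
  show "{h::'a poly. p dvd coeff h 0} \<noteq> UNIV" proof
    assume "{h::'a poly. p dvd coeff h 0} = UNIV"
    then have "(1::'a poly) \<in> {h. p dvd coeff h 0}" by simp
    then show False using \<open>\<not> p dvd 1\<close> by simp
  qed
next
  fix J :: "'a poly set" assume J: "is_ideal J \<and> {h. p dvd coeff h 0} \<subseteq> J"
  show "J = {h. p dvd coeff h 0} \<or> J = UNIV"
  proof (cases "J \<subseteq> {h. p dvd coeff h 0}")
    case True then show ?thesis using J by blast
  next
    case False
    then obtain h where h: "h \<in> J" "\<not> p dvd coeff h 0" by blast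
    obtain d where d: "ideal_gen {p, coeff h 0} = ideal_gen {d}"
      using pid ideal_gen_ideal unfolding PID_type_def by blast
    have "p \<in> ideal_gen {d}" using d ideal_gen_sub[of "{p, coeff h 0}"] by auto
    then obtain e where e: "p = e * d" unfolding ideal_gen1 by auto
    have "coeff h 0 \<in> ideal_gen {d}" using d ideal_gen_sub[of "{p, coeff h 0}"] by auto
    then obtain e' where e': "coeff h 0 = e' * d" unfolding ideal_gen1 by auto
    have "\<not> p dvd d"
    proof
      assume "p dvd d"
      then have "p dvd coeff h 0" using e' by simp
      then show False using h by simp
    qed
    moreover have "p dvd e * d" using e by simp
    ultimately have "p dvd e" using pr prime_elem_dvd_multD by blast
    then obtain k where k: "e = p * k" by (rule dvdE)
    have "p * 1 = p * (k * d)" using e k by (simp add: mult.assoc)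
    then have "1 = k * d" using pr by (simp add: prime_elem_def)
    then have di: "1 = k * d" .
    have "1 \<in> ideal_gen {d}" unfolding ideal_gen1 using di by auto
    then have "1 \<in> ideal_gen {p, coeff h 0}" using d by simp
    then obtain u v where uv: "1 = u * p + v * coeff h 0" unfolding ideal_gen2 by blast
    obtain t where t: "h = [:coeff h 0:] + Xv * t" using split_poly by blast
    have sub: "{h. p dvd coeff h 0} \<subseteq> J" using J by simp
    have "Xv * t \<in> {h. p dvd coeff h 0}" by (simp add: Xv_def coeff_mult_0)
    then have m1: "Xv * t \<in> J" using sub by (rule subsetD[rotated])
    have "[:p:] \<in> {h. p dvd coeff h 0}" by simp
    then have m2: "[:p:] \<in> J" using sub by (rule subsetD[rotated])
    have JI: "is_ideal J" using J by simp
    have hv: "[:v:] * h = [:v:] * [:coeff h 0:] + [:v:] * (Xv * t)"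
      using arg_cong[OF t, of "\<lambda>x. [:v:] * x"] by (simp only: distrib_left)
    have "[:u:] * [:p:] + [:v:] * h - [:v:] * (Xv * t) = [:u * p + v * coeff h 0:]"
      unfolding hv by simp
    also have "\<dots> = 1" using uv by simp
    finally have "(1::'a poly) = [:u:] * [:p:] + [:v:] * h - [:v:] * (Xv * t)" by simp
    also have "\<dots> \<in> J"
      by (rule ideal_diff[OF JI ideal_addI[OF JI ideal_multI[OF JI m2] ideal_multI[OF JI h(1)]] ideal_multI[OF JI m1]])
    finally have one: "1 \<in> J" .
    have "J = UNIV"
    proof (rule set_eqI, rule iffI)
      fix x show "x \<in> J" using ideal_multI[OF JI one, of x] by simp
    next
      fix x :: "'a poly" assume "x \<in> J" then show "x \<in> UNIV" by simp
    qed
    then show ?thesis by blast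
  qed
qed


lemma bezout_prime:
  fixes p :: "'a::idom"
  assumes pid: "PID_type TYPE('a)" and pr: "prime_elem p" and nd: "\<not> p dvd c"
  shows "\<exists>u v. 1 = u * p + v * c"
proof -
  obtain d where d: "ideal_gen {p, c} = ideal_gen {d}"
    using pid ideal_gen_ideal unfolding PID_type_def by blast
  have "p \<in> ideal_gen {d}" using d ideal_gen_sub[of "{p, c}"] by auto
  then obtain e where e: "p = e * d" unfolding ideal_gen1 by auto
  have "c \<in> ideal_gen {d}" using d ideal_gen_sub[of "{p, c}"] by auto
  then obtain e' where e': "c = e' * d" unfolding ideal_gen1 by auto
  have "\<not> p dvd d"
  proof
    assume "p dvd d"
    then have "p dvd c" using e' by simp
    then show False using nd by simp
  qed
  moreover have "p dvd e * d" using e by simp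
  ultimately have "p dvd e" using pr prime_elem_dvd_multD by blast
  then obtain k where k: "e = p * k" by (rule dvdE)
  have "p * 1 = p * (k * d)" using e k by (simp add: mult.assoc)
  then have di: "1 = k * d" using pr by (simp add: prime_elem_def)
  have "1 \<in> ideal_gen {d}" unfolding ideal_gen1 using di by auto
  then have "1 \<in> ideal_gen {p, c}" using d by simp
  then show ?thesis unfolding ideal_gen2 by blast
qed

lemma F_in: fixes p :: "'a::comm_ring_1" shows "[:- p, 0, 1:] \<in> ideal_gen {[:- p, 0, 1:], [:0, 0, 0, 1:]}"
  using ideal_gen_sub[of "{[:- p, 0, 1:], [:0, 0, 0, 1:]}"] by auto
lemma G_in: fixes p :: "'a::comm_ring_1" shows "[:0, 0, 0, 1:] \<in> ideal_gen {[:- p, 0, 1:], [:0, 0, 0, 1:]}"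
  using ideal_gen_sub[of "{[:- p, 0, 1:], [:0, 0, 0, 1:]}"] by auto

lemma p2_in: fixes p :: "'a::comm_ring_1" shows "[:p^2:] \<in> ideal_gen {[:- p, 0, 1:], [:0, 0, 0, 1:]}"
proof -
  have "[:p^2:] = (- (Xv^2) - [:p:]) * [:- p, 0, 1:] + Xv * [:0, 0, 0, 1:]"
    unfolding f_eq g_eq by (simp add: algebra_simps power2_eq_square power3_eq_cube power4_eq_xxxx)
  then show ?thesis unfolding ideal_gen2 by blast
qed


lemma I_sub_M: fixes p :: "'a::comm_ring_1"
  shows "ideal_gen {[:- p, 0, 1:], [:0, 0, 0, 1:]} \<subseteq> {h. p dvd coeff h 0}"
  unfolding ideal_gen2 by (auto simp: coeff_mult_0)

lemma M_sub_rad: fixes p :: "'a::comm_ring_1"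
  assumes "p dvd coeff h 0"
  shows "h ^ 4 \<in> ideal_gen {[:- p, 0, 1:], [:0, 0, 0, 1:]}"
proof -
  let ?I = "ideal_gen {[:- p, 0, 1:], [:0, 0, 0, 1:]}"
  have II: "is_ideal ?I" by (rule ideal_gen_ideal)
  obtain k where k: "coeff h 0 = p * k" using assms by (rule dvdE)
  obtain t where t: "h = [:coeff h 0:] + Xv * t" using split_poly by blast
  define u where "u = [:coeff h 0:]"
  define v where "v = Xv * t"
  have hu: "h = u + v" using t u_def v_def by simp
  have u2: "u^2 = [:k^2:] * [:p^2:]" unfolding u_def k
    by (simp add: power_mult_distrib poly_const_pow mult.commute)
  have u2I: "u^2 \<in> ?I" unfolding u2 by (rule ideal_multI[OF II p2_in])
  have v3: "v^3 = t^3 * [:0, 0, 0, 1:]" unfolding v_def g_eq by (simp add: power_mult_distrib)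
  have v3I: "v^3 \<in> ?I" unfolding v3 by (rule ideal_multI[OF II G_in])
  have "h^4 = u^2 * (u^2 + 4*u*v + 6*v^2) + v^3 * (4*u + v)"
    unfolding hu by (simp add: algebra_simps power2_eq_square power3_eq_cube power4_eq_xxxx)
  also have "\<dots> \<in> ?I"
    by (rule ideal_addI[OF II]; simp only: mult.commute[of "u^2"] mult.commute[of "v^3"];
        rule ideal_multI[OF II]; fact)
  finally show ?thesis .
qed


lemma rad_eq: fixes p :: "'a::idom"
  assumes pr: "prime_elem p"
  shows "radical (ideal_gen {[:- p, 0, 1:], [:0, 0, 0, 1:]}) = {h. p dvd coeff h 0}"
proof (rule set_eqI, rule iffI)
  fix h assume "h \<in> radical (ideal_gen {[:- p, 0, 1:], [:0, 0, 0, 1:]})"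
  then obtain n where "h ^ n \<in> ideal_gen {[:- p, 0, 1:], [:0, 0, 0, 1:]}" unfolding radical_def by blast
  then have "p dvd coeff (h^n) 0" using I_sub_M by blast
  then have "p dvd (coeff h 0)^n" by (simp add: coeff_0_power)
  then show "h \<in> {h. p dvd coeff h 0}" using prime_elem_dvd_power[OF pr] by simp
next
  fix h assume "h \<in> {h. p dvd coeff h 0}"
  then show "h \<in> radical (ideal_gen {[:- p, 0, 1:], [:0, 0, 0, 1:]})"
    unfolding radical_def using M_sub_rad by blast
qed

lemma down: 
  assumes II: "is_ideal I" and ab: "a * b \<in> I" and m: "m = 1 - r * b"
  shows "a * m ^ n \<in> I \<Longrightarrow> a \<in> I"
proof (induction n)
  case 0 then show ?case by simp
next
  case (Suc n)
  have "a * m ^ n = a * m ^ Suc n + (r * m ^ n) * (a * b)" unfolding m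
    by (simp add: algebra_simps)
  also have "\<dots> \<in> I" by (rule ideal_addI[OF II Suc.prems ideal_multI[OF II ab]])
  finally show ?case by (rule Suc.IH)
qed

lemma primary: fixes p :: "'a::idom"
  assumes pid: "PID_type TYPE('a)" and pr: "prime_elem p"
  shows "primary_ideal (ideal_gen {[:- p, 0, 1:], [:0, 0, 0, 1:]})"
  unfolding primary_ideal_def
proof (intro conjI allI impI)
  let ?I = "ideal_gen {[:- p, 0, 1:], [:0, 0, 0, 1:]}"
  have II: "is_ideal ?I" by (rule ideal_gen_ideal)
  show "is_ideal ?I" by (rule II)
  have "\<not> p dvd 1" using pr by (simp add: prime_elem_def)
  show "?I \<noteq> UNIV"
  proof
    assume "?I = UNIV"
    then have "(1::'a poly) \<in> {h. p dvd coeff h 0}" using I_sub_M[of p] by blast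
    then show False using \<open>\<not> p dvd 1\<close> by simp
  qed
  fix a b assume ab: "a * b \<in> ?I"
  show "a \<in> ?I \<or> b \<in> radical ?I"
  proof (cases "p dvd coeff b 0")
    case True then show ?thesis using rad_eq[OF pr] by simp
  next
    case False
    obtain u v where uv: "1 = u * p + v * coeff b 0" using bezout_prime[OF pid pr False] by blast
    define m where "m = 1 - [:v:] * b"
    have "coeff m 0 = 1 - v * coeff b 0" unfolding m_def by (simp add: coeff_mult_0)
    also have "\<dots> = u * p" using uv by (simp add: algebra_simps)
    finally have "m \<in> radical ?I" using rad_eq[OF pr] by simp
    then obtain n where "m ^ n \<in> ?I" unfolding radical_def by blast
    then have "a * m ^ n \<in> ?I" by (rule ideal_multI[OF II])
    then have "a \<in> ?I" by (rule down[OF II ab m_def])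
    then show ?thesis by simp
  qed
qed


lemma cube_id: "(P::'b::idom)^3 = (P + X^2 + X^2) * ((X^2-P)*(X^2-P)) - (X+X+X)*((X^2-P)*X^3) + X^3*X^3"
  by algebra

lemma not_ps: fixes p :: "'a::idom"
  assumes pr: "prime_elem p"
  shows "\<not> power_stable (ideal_gen {[:- p, 0, 1:], [:0, 0, 0, 1:]})"
proof
  let ?I = "ideal_gen {[:- p, 0, 1:], [:0, 0, 0, 1:]}"
  let ?F = "[:- p, 0, 1:]" and ?G = "[:0, 0, 0, 1:]"
  assume "power_stable ?I"
  then have eq: "contr (ideal_pow ?I 2) = ideal_pow (contr ?I) 2"
    unfolding power_stable_def by simp
  have II: "is_ideal ?I" by (rule ideal_gen_ideal)
  have sub1: "?I \<subseteq> ideal_mult ?I UNIV"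
  proof
    fix x assume "x \<in> ?I"
    then have "x * 1 \<in> ideal_mult ?I UNIV" by (rule ideal_mult_mem) simp
    then show "x \<in> ideal_mult ?I UNIV" by simp
  qed
  have P2: "ideal_pow ?I 2 = ideal_mult ?I (ideal_mult ?I UNIV)" by (simp add: numeral_2_eq_2)
  have JJ: "is_ideal (ideal_pow ?I 2)" unfolding P2 by (rule ideal_mult_ideal)
  have FF: "?F * ?F \<in> ideal_pow ?I 2" unfolding P2 using F_in sub1 by (intro ideal_mult_mem) auto
  have FG: "?F * ?G \<in> ideal_pow ?I 2" unfolding P2 using F_in G_in sub1 by (intro ideal_mult_mem) auto
  have GG: "?G * ?G \<in> ideal_pow ?I 2" unfolding P2 using G_in sub1 by (intro ideal_mult_mem) auto
  have "[:p^3:] = ([:p:] + Xv^2 + Xv^2) * (?F * ?F) - (Xv + Xv + Xv) * (?F * ?G) + ?G * ?G"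
    unfolding f_eq g_eq poly_const_pow[symmetric] by (rule cube_id)
  also have "\<dots> \<in> ideal_pow ?I 2"
    by (rule ideal_addI[OF JJ ideal_diff[OF JJ ideal_multI[OF JJ FF] ideal_multI[OF JJ FG]] GG])
  finally have "p^3 \<in> contr (ideal_pow ?I 2)" unfolding contr_def by simp
  then have p3: "p^3 \<in> ideal_pow (contr ?I) 2" using eq by simp
  have c1: "contr ?I \<subseteq> {c. p^2 dvd c}"
  proof
    fix c assume "c \<in> contr ?I"
    then have "[:c:] \<in> ?I" unfolding contr_def by simp
    then obtain a b where "[:c:] = a * ?F + b * ?G" unfolding ideal_gen2 by blast
    then show "c \<in> {c. p^2 dvd c}" using contr_I by blast
  qed
  have c2: "ideal_mult (contr ?I) UNIV \<subseteq> {c. p^2 dvd c}"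
    by (rule ideal_mult_sub[OF dvd_ideal]) (use c1 in auto)
  have c3: "ideal_pow (contr ?I) 2 \<subseteq> {c. p^4 dvd c}"
    unfolding numeral_2_eq_2 ideal_pow.simps
  proof (rule ideal_mult_sub[OF dvd_ideal])
    fix a b assume "a \<in> contr ?I" "b \<in> ideal_mult (contr ?I) UNIV"
    then have "p^2 dvd a" "p^2 dvd b" using c1 c2 by auto
    then have "p^2 * p^2 dvd a * b" by (rule mult_dvd_mono)
    then show "a * b \<in> {c. p^4 dvd c}" by (simp add: power_add[symmetric])
  qed
  have "p^4 dvd p^3" using p3 c3 by blast
  then have "p^3 * p dvd p^3 * 1" by (simp add: power_Suc2[symmetric] del: power_Suc)
  moreover have "p^3 \<noteq> 0" using pr by (simp add: prime_elem_def)
  ultimately have "p dvd 1" using dvd_mult_cancel_left by blast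
  then show False using pr by (simp add: prime_elem_def)
qed

theorem mainTheorem19:
  fixes p :: "'a::idom"
  assumes "PID_type TYPE('a)"
    and "prime_elem p"
  defines "I \<equiv> ideal_gen {[:- p, 0, 1:], [:0, 0, 0, 1:]}"
  shows "radical I = ideal_gen {[:0, 1:], [:p:]}
    \<and> maximal_ideal (ideal_gen {[:0, 1:], [:p:]})
    \<and> primary_ideal I
    \<and> \<not> power_stable I"
proof -
  have M: "ideal_gen {[:0, 1:], [:p:]} = {h. p dvd coeff h 0}"
    using M_eq[of p] by (simp add: Xv_def)
  show ?thesis unfolding I_def M
    using rad_eq[OF assms(2)] maximal_M[OF assms(1,2)] primary[OF assms(1,2)] not_ps[OF assms(2)] by simp
qed

end
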